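(* Let $N_o>0$, $\alpha>0$, and $\eta(d)=\frac{1}{(1+d)^\alpha}$. Let $C,D>0$ and let $t,r\in\mathbb{R}^2$ and $T$ a finite subset of $\mathbb{R}^2$ be such that $(t,r,T)$ satisfies the DC$(C,D)$ criterion. Then for all $P>0$, $$\mathrm{SINR}(t,r,T,P,N_o,\eta)\ \ge\ \frac{1}{(1+C)^\alpha\Big(\frac{N_o}{P}+\sum_{k=1}^{K}\frac{6k+3}{(1+kC(1+D/2))^\alpha}\Big)},$$ where $K=\Big\lfloor\frac{\max\{\|t'-r\|:t'\in T\}}{C(1+D/2)}\Big\rfloor$.
   Context: $\mathrm{SINR}(t,r,T,P,N_o,\eta)=\dfrac{P\eta(\|t-r\|)}{N_o+\sum_{t'\in T}P\eta(\|t'-r\|)}$. The triple $(t,r,T)$ satisfies DC$(C,D)$ if $\|t-r\|\le C$ and $\|t'-t''\|\ge C(2+D)$ for all distinct $t',t''\in T\cup\{t\}$. *)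

theory Defs
  imports "HOL-Analysis.Analysis"
begin

definition SINR :: "real^2 \<Rightarrow> real^2 \<Rightarrow> (real^2) set \<Rightarrow> real \<Rightarrow> real \<Rightarrow> (real \<Rightarrow> real) \<Rightarrow> real" where
  "SINR t r T P No \<eta> = P * \<eta> (norm (t - r)) / (No + (\<Sum>t'\<in>T. P * \<eta> (norm (t' - r))))"

definition DC :: "real \<Rightarrow> real \<Rightarrow> real^2 \<Rightarrow> real^2 \<Rightarrow> (real^2) set \<Rightarrow> bool" where
  "DC C D t r T \<longleftrightarrow> norm (t - r) \<le> C \<and>
     (\<forall>t'\<in>T \<union> {t}. \<forall>t''\<in>T \<union> {t}. t' \<noteq> t'' \<longrightarrow> norm (t' - t'') \<ge> C * (2 + D))"

end

theory Submission
  imports Defs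
begin

lemma ball_fin: "R \<ge> 0 \<Longrightarrow> ball (c::real^2) R \<in> fmeasurable lborel"
  using emeasure_ball[of R c] by (auto simp: fmeasurable_def)

lemma ball_emeas: "R \<ge> 0 \<Longrightarrow> emeasure lborel (ball (c::real^2) R) \<noteq> \<infinity>"
  using emeasure_ball[of R c] by simp

lemma ball_meas: "R \<ge> 0 \<Longrightarrow> measure lborel (ball (c::real^2) R) = unit_ball_vol 2 * R^2"
  using content_ball[of R c] by simp

lemma packing:
  fixes S :: "(real^2) set" and r :: "real^2" and R k :: real
  assumes R: "R > 0" and k: "k \<ge> 1" and fin: "finite S"
    and sep: "\<And>a b. a \<in> S \<Longrightarrow> b \<in> S \<Longrightarrow> a \<noteq> b \<Longrightarrow> norm (a - b) \<ge> 2 * R"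
    and rng: "\<And>s. s \<in> S \<Longrightarrow> k * R \<le> norm (s - r) \<and> norm (s - r) < (k + 1) * R"
  shows "real (card S) \<le> 6 * k + 3"
proof -
  define V where "V = unit_ball_vol 2"
  have V: "V > 0" unfolding V_def by simp
  define A where "A = (\<Union>s\<in>S. ball s R)"
  have dis: "disjoint_family_on (\<lambda>s. ball s R) S"
    unfolding disjoint_family_on_def
  proof (intro ballI impI)
    fix a b assume "a \<in> S" "b \<in> S" "a \<noteq> b"
    hence "norm (a - b) \<ge> 2 * R" using sep by auto
    show "ball a R \<inter> ball b R = {}"
    proof (rule ccontr)
      assume "ball a R \<inter> ball b R \<noteq> {}"
      then obtain x where x: "dist a x < R" "dist b x < R" by auto
      have "dist a b \<le> dist a x + dist b x" by (metis dist_commute dist_triangle)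
      thus False using x \<open>norm (a - b) \<ge> 2 * R\<close> by (simp add: dist_norm)
    qed
  qed
  have mA: "measure lborel A = real (card S) * (V * R^2)"
    unfolding A_def
    by (subst measure_finite_Union[OF fin _ dis]) (use R ball_meas[of R] ball_emeas[of R] in \<open>auto simp: V_def\<close>)
  have AB: "A \<inter> ball r ((k - 1) * R) = {}"
  proof (rule ccontr)
    assume "A \<inter> ball r ((k - 1) * R) \<noteq> {}"
    then obtain x s where s: "s \<in> S" "dist s x < R" "dist r x < (k - 1) * R" by (auto simp: A_def)
    have "norm (s - r) \<le> dist s x + dist r x" by (simp add: dist_norm) (metis dist_norm dist_triangle3 dist_commute)
    thus False using rng[OF s(1)] s by (simp add: algebra_simps)
  qed
  have sub: "A \<union> ball r ((k - 1) * R) \<subseteq> ball r ((k + 2) * R)"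
  proof
    fix x assume "x \<in> A \<union> ball r ((k - 1) * R)"
    then show "x \<in> ball r ((k + 2) * R)"
    proof
      assume "x \<in> A"
      then obtain s where s: "s \<in> S" "dist s x < R" by (auto simp: A_def)
      have "dist r x \<le> dist r s + dist s x" by (rule dist_triangle)
      thus ?thesis using rng[OF s(1)] s by (simp add: dist_norm norm_minus_commute algebra_simps)
    next
      assume "x \<in> ball r ((k - 1) * R)" thus ?thesis using R by (auto simp: algebra_simps)
    qed
  qed
  have k1: "(k - 1) * R \<ge> 0" using k R by simp
  have "measure lborel (A \<union> ball r ((k - 1) * R)) = measure lborel A + measure lborel (ball r ((k - 1) * R))"
  proof (rule measure_Union)
    have "emeasure lborel A \<le> emeasure lborel (ball r ((k + 2) * R))"
      by (rule emeasure_mono) (use sub in \<open>auto simp: A_def intro!: borel_open open_UN\<close>)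
    moreover have "emeasure lborel (ball r ((k + 2) * R)) \<noteq> \<infinity>" using k R by (intro ball_emeas) simp
    ultimately show "emeasure lborel A \<noteq> \<infinity>" using top.extremum_unique by fastforce
    show "emeasure lborel (ball r ((k - 1) * R)) \<noteq> \<infinity>" using k1 by (rule ball_emeas)
    show "A \<in> sets lborel" by (auto simp: A_def intro!: borel_open open_UN)
    show "ball r ((k - 1) * R) \<in> sets lborel" by (auto intro!: borel_open)
    show "A \<inter> ball r ((k - 1) * R) = {}" by (rule AB)
  qed
  also have "\<dots> = real (card S) * (V * R^2) + V * ((k - 1) * R)^2"
    using mA ball_meas[OF k1] V_def by simp
  finally have e1: "measure lborel (A \<union> ball r ((k - 1) * R)) = real (card S) * (V * R^2) + V * ((k - 1) * R)^2" .
  have "measure lborel (A \<union> ball r ((k - 1) * R)) \<le> measure lborel (ball r ((k + 2) * R))"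
    apply (rule measure_mono_fmeasurable[OF sub])
    using k R by (auto simp: A_def intro!: ball_fin borel_open open_Un open_UN)
  also have "\<dots> = V * ((k + 2) * R)^2" using ball_meas[of "(k+2)*R" r] k R V_def by simp
  finally have "real (card S) * (V * R^2) + V * ((k - 1) * R)^2 \<le> V * ((k + 2) * R)^2" using e1 by simp
  hence "(real (card S) + (k - 1)^2) * (V * R^2) \<le> (k + 2)^2 * (V * R^2)"
    by (simp add: algebra_simps power2_eq_square)
  hence "real (card S) + (k - 1)^2 \<le> (k + 2)^2"
    using V R by (simp add: mult_le_cancel_right)
  thus ?thesis by (simp add: power2_eq_square algebra_simps)
qed

lemma eta_anti:
  fixes a :: real assumes "0 \<le> d1" "d1 \<le> d2" "a > 0"
  shows "1 / (1 + d2) powr a \<le> 1 / (1 + d1) powr a"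
proof -
  have "(1 + d1) powr a \<le> (1 + d2) powr a" using assms by (intro powr_mono2) auto
  moreover have "(1 + d1) powr a > 0" using assms by simp
  ultimately show ?thesis by (simp add: frac_le)
qed

theorem lemma1:
  fixes No \<alpha> C D P :: real and t r :: "real^2" and T :: "(real^2) set"
  assumes "No > 0" and "\<alpha> > 0" and "C > 0" and "D > 0"
    and "finite T" and "t \<notin> T"
    and "DC C D t r T"
    and "P > 0"
  shows "SINR t r T P No (\<lambda>d. 1 / (1 + d) powr \<alpha>) \<ge>
    1 / ((1 + C) powr \<alpha> * (No / P +
      (\<Sum>k\<in>{1..\<lfloor>Max {norm (t' - r) | t'. t' \<in> T} / (C * (1 + D / 2))\<rfloor>}.
          (6 * real_of_int k + 3) / (1 + real_of_int k * C * (1 + D / 2)) powr \<alpha>)))"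
proof -
  note No = assms(1) and al = assms(2) and CC = assms(3) and DD = assms(4) and fin = assms(5)
    and tT = assms(6) and P = assms(8)
  define \<eta> where "\<eta> = (\<lambda>d::real. 1 / (1 + d) powr \<alpha>)"
  define R where "R = C * (1 + D / 2)"
  define K where "K = \<lfloor>Max {norm (t' - r) | t'. t' \<in> T} / (C * (1 + D / 2))\<rfloor>"
  define d where "d = (\<lambda>x. norm (x - r))"
  define kk where "kk = (\<lambda>x. \<lfloor>d x / R\<rfloor>)"
  define S' where "S' = (\<Sum>k\<in>{1..K}. (6 * real_of_int k + 3) / (1 + real_of_int k * C * (1 + D / 2)) powr \<alpha>)"
  have R: "R > 0" "C \<le> R" using CC DD by (auto simp: R_def algebra_simps intro: add_pos_pos)
  have tr: "norm (t - r) \<le> C" using assms(7) by (simp add: DC_def)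
  have sepT: "\<And>a b. a \<in> T \<union> {t} \<Longrightarrow> b \<in> T \<union> {t} \<Longrightarrow> a \<noteq> b \<Longrightarrow> norm (a - b) \<ge> 2 * R"
    using assms(7) by (auto simp: DC_def R_def algebra_simps)
  have dge: "d x \<ge> R" if "x \<in> T" for x
  proof -
    have "x \<noteq> t" using that tT by auto
    hence "norm (x - t) \<ge> 2 * R" using sepT[of x t] that by auto
    moreover have "norm (x - t) \<le> norm (x - r) + norm (t - r)"
      by (metis norm_diff_triangle_ineq norm_minus_commute add_diff_cancel_left' diff_add_eq_diff_diff_swap
          diff_diff_eq2 norm_triangle_ineq4)
    ultimately show ?thesis using tr R by (simp add: d_def)
  qed
  have kkb: "real_of_int (kk x) * R \<le> d x \<and> d x < (real_of_int (kk x) + 1) * R" if "x \<in> T" for x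
  proof -
    have "real_of_int (kk x) \<le> d x / R" "d x / R < real_of_int (kk x) + 1"
      unfolding kk_def by linarith+
    thus ?thesis using R by (simp add: field_simps)
  qed
  have kk1: "kk x \<ge> 1" if "x \<in> T" for x
  proof -
    have "d x / R \<ge> 1" using dge[OF that] R by simp
    thus ?thesis unfolding kk_def by linarith
  qed
  have kkK: "kk x \<le> K" if "x \<in> T" for x
  proof -
    have "d x \<le> Max {norm (t' - r) | t'. t' \<in> T}"
      using that fin by (intro Max_ge) (auto simp: d_def)
    hence "d x / R \<le> Max {norm (t' - r) | t'. t' \<in> T} / R" using R by (simp add: divide_right_mono)
    thus ?thesis unfolding kk_def K_def R_def by (intro floor_mono)
  qed
  define g where "g = (\<lambda>k::int. \<eta> (real_of_int k * R))"
  have g0: "g k \<ge> 0" for k by (simp add: g_def \<eta>_def)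
  have S1: "(\<Sum>x\<in>T. \<eta> (d x)) \<le> (\<Sum>x\<in>T. g (kk x))"
  proof (rule sum_mono)
    fix x assume "x \<in> T"
    thus "\<eta> (d x) \<le> g (kk x)" unfolding g_def \<eta>_def
      using kkb[of x] kk1[of x] R al by (intro eta_anti) auto
  qed
  also have "\<dots> = (\<Sum>x\<in>T. \<Sum>k\<in>{1..K}. if k = kk x then g k else 0)"
    by (rule sum.cong) (use kk1 kkK in auto)
  also have "\<dots> = (\<Sum>k\<in>{1..K}. \<Sum>x\<in>T. if k = kk x then g k else 0)"
    by (rule sum.swap)
  also have "\<dots> = (\<Sum>k\<in>{1..K}. real (card {x\<in>T. k = kk x}) * g k)"
  proof (rule sum.cong)
    fix k assume "k \<in> {1..K}"
    show "(\<Sum>x\<in>T. if k = kk x then g k else 0) = real (card {x\<in>T. k = kk x}) * g k"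
    proof -
      have "(\<Sum>x\<in>{x\<in>T. k = kk x}. g k) = (\<Sum>x\<in>T. if k = kk x then g k else 0)"
        by (rule sum.inter_filter[OF fin])
      moreover have "(\<Sum>x\<in>{x\<in>T. k = kk x}. g k) = real (card {x\<in>T. k = kk x}) * g k"
        by (simp only: sum_constant of_nat_id)
      ultimately show ?thesis by simp
    qed
  qed simp
  also have "\<dots> \<le> (\<Sum>k\<in>{1..K}. (6 * real_of_int k + 3) * g k)"
  proof (rule sum_mono)
    fix k assume k: "k \<in> {1..K}"
    have "real (card {x\<in>T. k = kk x}) \<le> 6 * real_of_int k + 3"
    proof (rule packing[OF R(1) _ _ _ , of "real_of_int k" _ r])
      show "1 \<le> real_of_int k" using k by simp
      show "finite {x\<in>T. k = kk x}" using fin by simp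
      show "\<And>a b. a \<in> {x\<in>T. k = kk x} \<Longrightarrow> b \<in> {x\<in>T. k = kk x} \<Longrightarrow> a \<noteq> b \<Longrightarrow> norm (a - b) \<ge> 2 * R"
        using sepT by auto
      show "\<And>s. s \<in> {x\<in>T. k = kk x} \<Longrightarrow> real_of_int k * R \<le> norm (s - r) \<and> norm (s - r) < (real_of_int k + 1) * R"
        using kkb by (auto simp: d_def)
    qed
    thus "real (card {x\<in>T. k = kk x}) * g k \<le> (6 * real_of_int k + 3) * g k"
      using g0 by (intro mult_right_mono) auto
  qed
  also have "\<dots> = S'"
    unfolding S'_def g_def \<eta>_def R_def by (rule sum.cong) (auto simp: mult.assoc)
  finally have SS: "(\<Sum>x\<in>T. \<eta> (d x)) \<le> S'" .
  have S0: "(\<Sum>x\<in>T. \<eta> (d x)) \<ge> 0" by (intro sum_nonneg) (simp add: \<eta>_def)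
  have e0: "\<eta> (norm (t - r)) \<ge> \<eta> C" unfolding \<eta>_def using tr al by (intro eta_anti) auto
  have eC: "\<eta> C > 0" using CC by (simp add: \<eta>_def)
  have "SINR t r T P No \<eta> = \<eta> (norm (t - r)) / (No / P + (\<Sum>x\<in>T. \<eta> (d x)))"
    using P No unfolding SINR_def d_def by (simp add: sum_distrib_left[symmetric] field_simps)
  also have "\<dots> \<ge> \<eta> C / (No / P + S')"
  proof -
    have "No / P > 0" using No P by simp
    thus ?thesis using SS S0 e0 eC by (intro frac_le) auto
  qed
  finally have "SINR t r T P No \<eta> \<ge> \<eta> C / (No / P + S')" .
  thus ?thesis unfolding \<eta>_def S'_def K_def by simp
qed

end
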